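(* Let $\epsilon>0$ and let $\Delta\ge 1$ be an integer. There exists a deterministic distributed algorithm (in the synchronous port-numbering model described in the context) which, on every instance of the stable marriage problem whose bicoloured graph has maximum degree at most $\Delta$, terminates after $T \le 4 + 2\Delta^2/\epsilon$ synchronous communication steps and outputs an $\epsilon$-stable matching.
   Context: An instance of the stable marriage problem is a simple undirected bipartite graph $\mathcal{G}=(R\cup B,E)$ (a "bicoloured graph": nodes in $R$ are red, nodes in $B$ are blue, every edge joins a red and a blue node), possibly disconnected but without isolated nodes, in which each node $v$ has a linear order (its preference) on its neighbours; non-adjacent nodes are unacceptable to each other. $\Delta$ denotes the maximum degree. A matching is a set $M\subseteq E$ with every node incident to at most one edge of $M$. An edge $\{u,v\}\in E\setminus M$ is unstable relative to $M$ if (i) $u$ is unmatched or prefers $v$ to its partner in $M$, and (ii) $v$ is unmatched or prefers $u$ to its partner in $M$. $M$ is $\epsilon$-stable if the number of unstable edges is at most $\epsilon|M|$. Distributed model: $\mathcal{G}$ is the communication graph. Initially each node $v$ knows only its colour (red or blue), its degree $d(v)$, and the running time $T$; $v$ has $d(v)$ ports to its neighbours, numbered according to $v$'s preference order. There are no node identifiers. Computation is synchronous: in each time step every node receives messages from its neighbours, performs deterministic local computation, and sends a message to each neighbour. After $T$ steps each node outputs which neighbour (if any) is its partner, and outputs must be consistent (if $u$ names $v$, then $v$ names $u$), so the outputs define a matching. *)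

theory Defs
  imports Complex_Main
begin

text \<open>An instance: a finite node set V, a colouring red (True = red, False = blue),
and for each node v its neighbours listed in preference order pref v
(most preferred first). Port i of v leads to the neighbour pref v ! i.\<close>

definition sm_instance :: "'v set \<Rightarrow> ('v \<Rightarrow> bool) \<Rightarrow> ('v \<Rightarrow> 'v list) \<Rightarrow> bool" where
  "sm_instance V red pref \<longleftrightarrow> finite V \<and>
     (\<forall>v\<in>V. distinct (pref v) \<and> pref v \<noteq> [] \<and> set (pref v) \<subseteq> V \<and>
        (\<forall>u\<in>set (pref v). red u \<noteq> red v \<and> v \<in> set (pref u)))"

definition max_degree_le :: "'v set \<Rightarrow> ('v \<Rightarrow> 'v list) \<Rightarrow> nat \<Rightarrow> bool" where
  "max_degree_le V pref D \<longleftrightarrow> (\<forall>v\<in>V. length (pref v) \<le> D)"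

definition sm_edges :: "'v set \<Rightarrow> ('v \<Rightarrow> 'v list) \<Rightarrow> 'v set set" where
  "sm_edges V pref = {{u, v} | u v. u \<in> V \<and> v \<in> set (pref u)}"

text \<open>Position of w in v's preference list (0 = most preferred); also the port number.\<close>
definition port :: "('v \<Rightarrow> 'v list) \<Rightarrow> 'v \<Rightarrow> 'v \<Rightarrow> nat" where
  "port pref v w = (LEAST i. i < length (pref v) \<and> pref v ! i = w)"

definition prefers :: "('v \<Rightarrow> 'v list) \<Rightarrow> 'v \<Rightarrow> 'v \<Rightarrow> 'v \<Rightarrow> bool" where
  "prefers pref v a b \<longleftrightarrow> port pref v a < port pref v b"

definition is_matching :: "'v set \<Rightarrow> ('v \<Rightarrow> 'v list) \<Rightarrow> 'v set set \<Rightarrow> bool" where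
  "is_matching V pref M \<longleftrightarrow> M \<subseteq> sm_edges V pref \<and>
     (\<forall>e\<in>M. \<forall>e'\<in>M. e \<noteq> e' \<longrightarrow> e \<inter> e' = {})"

definition unmatched_or_prefers :: "('v \<Rightarrow> 'v list) \<Rightarrow> 'v set set \<Rightarrow> 'v \<Rightarrow> 'v \<Rightarrow> bool" where
  "unmatched_or_prefers pref M u v \<longleftrightarrow>
     (\<forall>w. {u, w} \<in> M \<longrightarrow> prefers pref u v w)"

definition unstable_edges :: "'v set \<Rightarrow> ('v \<Rightarrow> 'v list) \<Rightarrow> 'v set set \<Rightarrow> 'v set set" where
  "unstable_edges V pref M = {{u, v} | u v. {u, v} \<in> sm_edges V pref - M \<and>
      unmatched_or_prefers pref M u v \<and> unmatched_or_prefers pref M v u}"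

definition eps_stable :: "real \<Rightarrow> 'v set \<Rightarrow> ('v \<Rightarrow> 'v list) \<Rightarrow> 'v set set \<Rightarrow> bool" where
  "eps_stable eps V pref M \<longleftrightarrow> is_matching V pref M \<and>
     real (card (unstable_edges V pref M)) \<le> eps * real (card M)"

text \<open>A deterministic algorithm with states and messages encoded as natural numbers:
  init c d T : initial state from colour c, degree d and running time T;
  msg s i    : message sent on port i in state s;
  trans s ms : new state after receiving ms (ms ! i = message arriving on port i);
  out s      : output (Some i = partner is the neighbour on port i, None = unmatched).\<close>

record algorithm =
  init :: "bool \<Rightarrow> nat \<Rightarrow> nat \<Rightarrow> nat"
  msg :: "nat \<Rightarrow> nat \<Rightarrow> nat"
  trans :: "nat \<Rightarrow> nat list \<Rightarrow> nat"
  out :: "nat \<Rightarrow> nat option"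

fun run :: "algorithm \<Rightarrow> nat \<Rightarrow> ('v \<Rightarrow> bool) \<Rightarrow> ('v \<Rightarrow> 'v list) \<Rightarrow> nat \<Rightarrow> 'v \<Rightarrow> nat" where
  "run A T red pref 0 v = init A (red v) (length (pref v)) T"
| "run A T red pref (Suc t) v =
     trans A (run A T red pref t v)
       (map (\<lambda>u. msg A (run A T red pref t u) (port pref u v)) (pref v))"

definition node_output :: "algorithm \<Rightarrow> nat \<Rightarrow> ('v \<Rightarrow> bool) \<Rightarrow> ('v \<Rightarrow> 'v list) \<Rightarrow> 'v \<Rightarrow> nat option" where
  "node_output A T red pref v = out A (run A T red pref T v)"

definition consistent_output :: "algorithm \<Rightarrow> nat \<Rightarrow> 'v set \<Rightarrow> ('v \<Rightarrow> bool) \<Rightarrow> ('v \<Rightarrow> 'v list) \<Rightarrow> bool" where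
  "consistent_output A T V red pref \<longleftrightarrow>
     (\<forall>v\<in>V. \<forall>i. node_output A T red pref v = Some i \<longrightarrow>
        i < length (pref v) \<and>
        node_output A T red pref (pref v ! i) = Some (port pref (pref v ! i) v))"

definition output_matching :: "algorithm \<Rightarrow> nat \<Rightarrow> 'v set \<Rightarrow> ('v \<Rightarrow> bool) \<Rightarrow> ('v \<Rightarrow> 'v list) \<Rightarrow> 'v set set" where
  "output_matching A T V red pref =
     {{v, pref v ! i} | v i. v \<in> V \<and> node_output A T red pref v = Some i}"

end

theory Submission
  imports Defs "HOL-Library.Countable"
begin

datatype st = St bool bool nat "nat option" bool
instance st :: countable by countable_datatype

definition proposes :: "('v \<Rightarrow> 'v list) \<Rightarrow> ('v \<Rightarrow> nat) \<Rightarrow> 'v \<Rightarrow> 'v \<Rightarrow> bool" where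
  "proposes pref p u w \<longleftrightarrow> p u < length (pref u) \<and> pref u ! p u = w"

definition heldW :: "('v \<Rightarrow> 'v list) \<Rightarrow> ('v \<Rightarrow> nat) \<Rightarrow> 'v \<Rightarrow> nat option" where
  "heldW pref p w = (if \<exists>i<length (pref w). proposes pref p (pref w ! i) w
     then Some (LEAST i. i < length (pref w) \<and> proposes pref p (pref w ! i) w) else None)"

definition accepted :: "('v \<Rightarrow> 'v list) \<Rightarrow> ('v \<Rightarrow> nat) \<Rightarrow> 'v \<Rightarrow> bool" where
  "accepted pref p m \<longleftrightarrow> p m < length (pref m) \<and>
     heldW pref p (pref m ! p m) = Some (port pref (pref m ! p m) m)"

definition step :: "('v \<Rightarrow> bool) \<Rightarrow> ('v \<Rightarrow> 'v list) \<Rightarrow> ('v \<Rightarrow> nat) \<Rightarrow> 'v \<Rightarrow> nat" where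
  "step red pref p m = (if red m \<and> p m < length (pref m) \<and> \<not> accepted pref p m then Suc (p m) else p m)"

definition ptr :: "('v \<Rightarrow> bool) \<Rightarrow> ('v \<Rightarrow> 'v list) \<Rightarrow> nat \<Rightarrow> 'v \<Rightarrow> nat" where
  "ptr red pref k = (step red pref ^^ k) (\<lambda>_. 0)"

lemma ptr_0[simp]: "ptr red pref 0 m = 0"
  by (simp add: ptr_def)

lemma ptr_Suc: "ptr red pref (Suc k) m = step red pref (ptr red pref k) m"
  by (simp add: ptr_def)

lemma port_nth:
  assumes "distinct (pref v)" "i < length (pref v)"
  shows "port pref v (pref v ! i) = i"
  unfolding port_def
  by (rule Least_equality) (use assms in \<open>auto simp: nth_eq_iff_index_eq\<close>)

lemma port_in:
  assumes "distinct (pref v)" "w \<in> set (pref v)"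
  shows "port pref v w < length (pref v) \<and> pref v ! port pref v w = w"
proof -
  obtain i where "i < length (pref v)" "pref v ! i = w" using assms(2) by (auto simp: in_set_conv_nth)
  thus ?thesis using port_nth[of pref v, OF assms(1)] by auto
qed

lemma heldW_Some:
  assumes "heldW pref p w = Some i"
  shows "i < length (pref w) \<and> proposes pref p (pref w ! i) w \<and>
         (\<forall>j<i. \<not> proposes pref p (pref w ! j) w)"
proof -
  have ex: "\<exists>i<length (pref w). proposes pref p (pref w ! i) w"
    using assms by (auto simp: heldW_def split: if_splits)
  have i: "i = (LEAST i. i < length (pref w) \<and> proposes pref p (pref w ! i) w)"
    using assms ex by (auto simp: heldW_def)
  show ?thesis
    using LeastI_ex[of "\<lambda>i. i < length (pref w) \<and> proposes pref p (pref w ! i) w"] ex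
      not_less_Least[of _ "\<lambda>i. i < length (pref w) \<and> proposes pref p (pref w ! i) w"]
    unfolding i[symmetric] by (metis less_trans)
qed

lemma heldW_le:
  assumes "j < length (pref w)" "proposes pref p (pref w ! j) w"
  shows "\<exists>i. heldW pref p w = Some i \<and> i \<le> j"
  using assms by (auto simp: heldW_def intro: Least_le)

locale inst =
  fixes V :: "'v set" and red :: "'v \<Rightarrow> bool" and pref :: "'v \<Rightarrow> 'v list"
  assumes inst: "sm_instance V red pref"
begin

lemma finV: "finite V" using inst by (simp add: sm_instance_def)
lemma dist: "v \<in> V \<Longrightarrow> distinct (pref v)" using inst by (simp add: sm_instance_def)
lemma nb: "v \<in> V \<Longrightarrow> u \<in> set (pref v) \<Longrightarrow> u \<in> V \<and> red u \<noteq> red v \<and> v \<in> set (pref u)"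
  using inst unfolding sm_instance_def by blast

abbreviation P where "P k \<equiv> ptr red pref k"

lemma ptr_nonred: "\<not> red m \<Longrightarrow> P k m = 0"
  by (induction k) (auto simp: ptr_Suc step_def)

lemma ptr_le: "P k m \<le> length (pref m)"
  by (induction k) (auto simp: ptr_Suc step_def)

lemma ptr_mono1: "P k m \<le> P (Suc k) m"
  by (auto simp: ptr_Suc step_def)

lemma ptr_mono: "k \<le> k' \<Longrightarrow> P k m \<le> P k' m"
  using lift_Suc_mono_le[of "\<lambda>k. P k m"] ptr_mono1 by blast

lemma accepted_of_held:
  assumes "w \<in> V" "heldW pref p w = Some i"
  shows "accepted pref p (pref w ! i) \<and> pref (pref w ! i) ! p (pref w ! i) = w"
proof -
  let ?u = "pref w ! i"
  from heldW_Some[OF assms(2)] have i: "i < length (pref w)" and pr: "proposes pref p ?u w" by auto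
  have "port pref w ?u = i" using port_nth[of pref w, OF dist[OF assms(1)] i] .
  thus ?thesis using pr assms(2) by (auto simp: accepted_def proposes_def)
qed

lemma held_persist:
  assumes "w \<in> V" "heldW pref (P k) w = Some i"
  shows "\<exists>i'. heldW pref (P (Suc k)) w = Some i' \<and> i' \<le> i"
proof -
  let ?u = "pref w ! i"
  from heldW_Some[OF assms(2)] have i: "i < length (pref w)" and pr: "proposes pref (P k) ?u w" by auto
  from accepted_of_held[OF assms] have "accepted pref (P k) ?u" by auto
  hence "P (Suc k) ?u = P k ?u" by (simp add: ptr_Suc step_def)
  hence "proposes pref (P (Suc k)) ?u w" using pr by (simp add: proposes_def)
  thus ?thesis using heldW_le[of _ pref w, OF i] by blast
qed

lemma rejected_inv:
  assumes "m \<in> V" "red m" "j < P k m"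
  shows "\<exists>i. heldW pref (P k) (pref m ! j) = Some i \<and> i < port pref (pref m ! j) m"
  using assms(3)
proof (induction k)
  case 0 thus ?case by simp
next
  case (Suc k)
  let ?w = "pref m ! j"
  have jd: "j < length (pref m)" using Suc.prems ptr_le[of "Suc k" m] by simp
  hence wS: "?w \<in> set (pref m)" by simp
  with nb[OF assms(1)] have wV: "?w \<in> V" and mw: "m \<in> set (pref ?w)" by auto
  show ?case
  proof (cases "j < P k m")
    case True
    from Suc.IH[OF True] obtain i where "heldW pref (P k) ?w = Some i" "i < port pref ?w m" by blast
    with held_persist[OF wV] show ?thesis by (meson le_less_trans)
  next
    case False
    with Suc.prems have ej: "j = P k m" and inc: "P k m < length (pref m) \<and> \<not> accepted pref (P k) m"
      by (auto simp: ptr_Suc step_def split: if_splits)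
    have pin: "port pref ?w m < length (pref ?w)" "pref ?w ! port pref ?w m = m"
      using port_in[of pref ?w, OF dist[OF wV] mw] by auto
    have "proposes pref (P k) (pref ?w ! port pref ?w m) ?w"
      using pin ej inc by (simp add: proposes_def)
    then obtain i where hi: "heldW pref (P k) ?w = Some i" "i \<le> port pref ?w m"
      using heldW_le[of _ pref ?w, OF pin(1)] by blast
    have "i \<noteq> port pref ?w m" using hi(1) inc ej by (auto simp: accepted_def)
    with hi have "i < port pref ?w m" by simp
    with held_persist[OF wV hi(1)] show ?thesis by (meson le_less_trans)
  qed
qed

end

context inst
begin

definition Men where "Men = {m\<in>V. red m}"
definition Acc where "Acc k = {m\<in>V. red m \<and> accepted pref (P k) m}"
definition Act where "Act k = {m\<in>V. red m \<and> P k m < length (pref m)}"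
definition R where "R k = {m\<in>V. red m \<and> P k m < length (pref m) \<and> \<not> accepted pref (P k) m}"
definition H where "H k = {w\<in>V. \<not> red w \<and> heldW pref (P k) w \<noteq> None}"
definition tgt where "tgt k m = pref m ! P k m"
definition Mt where "Mt k = (\<lambda>m. {m, tgt k m}) ` Acc k"

lemma fin_sets: "finite (Men)" "finite (Acc k)" "finite (Act k)" "finite (R k)" "finite (H k)"
  using finV by (auto simp: Men_def Acc_def Act_def R_def H_def)

lemma acc_tgt:
  assumes "m \<in> Acc k"
  shows "P k m < length (pref m) \<and> tgt k m \<in> set (pref m) \<and> tgt k m \<in> V \<and> \<not> red (tgt k m) \<and>
         m \<in> set (pref (tgt k m)) \<and>
         heldW pref (P k) (tgt k m) = Some (port pref (tgt k m) m)"
proof -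
  from assms have mV: "m \<in> V" "red m" and a: "accepted pref (P k) m" by (auto simp: Acc_def)
  from a have l: "P k m < length (pref m)" by (simp add: accepted_def)
  hence s: "tgt k m \<in> set (pref m)" by (simp add: tgt_def)
  with nb[OF mV(1)] mV a l show ?thesis by (auto simp: accepted_def tgt_def)
qed

lemma tgt_inj: "inj_on (tgt k) (Acc k)"
proof (rule inj_onI)
  fix a b assume a: "a \<in> Acc k" and b: "b \<in> Acc k" and e: "tgt k a = tgt k b"
  let ?w = "tgt k a"
  from acc_tgt[OF a] have wV: "?w \<in> V" and aw: "a \<in> set (pref ?w)"
    and ha: "heldW pref (P k) ?w = Some (port pref ?w a)" by auto
  from acc_tgt[OF b] e have bw: "b \<in> set (pref ?w)"
    and hb: "heldW pref (P k) ?w = Some (port pref ?w b)" by auto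
  have "port pref ?w a = port pref ?w b" using ha hb by simp
  thus "a = b" using port_in[of pref ?w, OF dist[OF wV] aw] port_in[of pref ?w, OF dist[OF wV] bw] by metis
qed

lemma tgt_img: "tgt k ` Acc k = H k"
proof
  show "tgt k ` Acc k \<subseteq> H k" using acc_tgt by (fastforce simp: H_def)
next
  show "H k \<subseteq> tgt k ` Acc k"
  proof
    fix w assume w: "w \<in> H k"
    then obtain i where wV: "w \<in> V" "\<not> red w" and h: "heldW pref (P k) w = Some i" by (auto simp: H_def)
    let ?u = "pref w ! i"
    from heldW_Some[OF h] have "i < length (pref w)" by auto
    hence uS: "?u \<in> set (pref w)" by simp
    with nb[OF wV(1)] wV have uV: "?u \<in> V" "red ?u" by auto
    from accepted_of_held[OF wV(1) h] have "accepted pref (P k) ?u" "tgt k ?u = w" by (auto simp: tgt_def)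
    with uV have "pref w ! i \<in> Acc k" "w = tgt k (pref w ! i)" by (auto simp: Acc_def)
    thus "w \<in> tgt k ` Acc k" by blast
  qed
qed

lemma card_Acc_H: "card (Acc k) = card (H k)"
  using card_image[OF tgt_inj] tgt_img by metis

lemma H_mono: "H k \<subseteq> H (Suc k)"
  using held_persist by (fastforce simp: H_def)

lemma card_R: "card (R k) = card (Act k) - card (Acc k)"
proof -
  have "R k = Act k - Acc k" "Acc k \<subseteq> Act k"
    by (auto simp: R_def Act_def Acc_def accepted_def)
  thus ?thesis using fin_sets by (simp add: card_Diff_subset)
qed

lemma card_R_Suc: "card (R (Suc k)) \<le> card (R k)"
proof -
  have "Act (Suc k) \<subseteq> Act k" unfolding Act_def using ptr_mono1 le_less_trans by blast
  hence a: "card (Act (Suc k)) \<le> card (Act k)" using fin_sets by (simp add: card_mono)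
  have "card (H k) \<le> card (H (Suc k))" using H_mono fin_sets by (simp add: card_mono)
  thus ?thesis using a card_R card_Acc_H by simp
qed

lemma card_R_anti: "k \<le> k' \<Longrightarrow> card (R k') \<le> card (R k)"
  using card_R_Suc by (metis (no_types, lifting) lift_Suc_antimono_le[of "\<lambda>k. card (R k)"])

lemma sum_ptr_Suc: "(\<Sum>m\<in>Men. P (Suc k) m) = (\<Sum>m\<in>Men. P k m) + card (R k)"
proof -
  have "\<And>m. m \<in> Men \<Longrightarrow> P (Suc k) m = P k m + (if m \<in> R k then 1 else 0)"
    by (auto simp: ptr_Suc step_def R_def Men_def)
  hence "(\<Sum>m\<in>Men. P (Suc k) m) = (\<Sum>m\<in>Men. P k m) + (\<Sum>m\<in>Men. (if m \<in> R k then 1 else 0))"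
    by (simp add: sum.distrib)
  moreover have "(\<Sum>m\<in>Men. (if m \<in> R k then 1 else (0::nat))) = card (Men \<inter> R k)"
    using fin_sets by (simp add: sum.If_cases)
  moreover have "Men \<inter> R k = R k" by (auto simp: Men_def R_def)
  ultimately show ?thesis by simp
qed

lemma sum_ptr: "(\<Sum>m\<in>Men. P K m) = (\<Sum>k<K. card (R k))"
  by (induction K) (simp_all add: sum_ptr_Suc)

lemma K_R: "K * card (R K) \<le> (\<Sum>k<K. card (R k))"
proof -
  have "(\<Sum>k<K. card (R K)) \<le> (\<Sum>k<K. card (R k))"
    by (rule sum_mono) (simp add: card_R_anti)
  thus ?thesis by simp
qed

lemma sum_ptr_le:
  assumes D: "max_degree_le V pref D"
  shows "(\<Sum>m\<in>Men. P K m) \<le> D * card (H K)"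
proof -
  define S where "S = Sigma Men (\<lambda>m. {..<P K m})"
  have cS: "card S = (\<Sum>m\<in>Men. P K m)" unfolding S_def using fin_sets by simp
  define g where "g = (\<lambda>(m, j). (pref m ! j, port pref (pref m ! j) m))"
  have inj: "inj_on g S"
  proof (rule inj_onI)
    fix x y assume x: "x \<in> S" and y: "y \<in> S" and e: "g x = g y"
    obtain m j where xe: "x = (m, j)" by force
    obtain m' j' where ye: "y = (m', j')" by force
    from x xe have m: "m \<in> V" "red m" "j < P K m" by (auto simp: S_def Men_def)
    from y ye have m': "m' \<in> V" "red m'" "j' < P K m'" by (auto simp: S_def Men_def)
    have jl: "j < length (pref m)" using m(3) ptr_le[of K m] by simp
    have jl': "j' < length (pref m')" using m'(3) ptr_le[of K m'] by simp
    let ?w = "pref m ! j"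
    from e xe ye have w: "pref m' ! j' = ?w" and pp: "port pref ?w m = port pref ?w m'"
      by (auto simp: g_def)
    have wS: "?w \<in> set (pref m)" using jl by simp
    with nb[OF m(1)] have wV: "?w \<in> V" and mw: "m \<in> set (pref ?w)" by auto
    have "?w \<in> set (pref m')" using jl' w by (metis nth_mem)
    with nb[OF m'(1)] have m'w: "m' \<in> set (pref ?w)" by auto
    have mm: "m = m'"
      using port_in[of pref ?w, OF dist[OF wV] mw] port_in[of pref ?w, OF dist[OF wV] m'w] pp by metis
    have "j = j'" using w mm jl jl' dist[OF m(1)] by (simp add: nth_eq_iff_index_eq)
    thus "x = y" using xe ye mm by simp
  qed
  have img: "g ` S \<subseteq> H K \<times> {..<D}"
  proof
    fix y assume "y \<in> g ` S"
    then obtain m j where m: "m \<in> V" "red m" "j < P K m" and y: "y = g (m, j)"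
      by (auto simp: S_def Men_def)
    let ?w = "pref m ! j"
    have jl: "j < length (pref m)" using m(3) ptr_le[of K m] by simp
    hence wS: "?w \<in> set (pref m)" by simp
    with nb[OF m(1)] m have wV: "?w \<in> V" "\<not> red ?w" and mw: "m \<in> set (pref ?w)" by auto
    from rejected_inv[OF m] have "heldW pref (P K) ?w \<noteq> None" by auto
    with wV have "?w \<in> H K" by (simp add: H_def)
    moreover have "port pref ?w m < D"
      using port_in[of pref ?w, OF dist[OF wV(1)] mw] D wV(1) unfolding max_degree_le_def
      by (meson less_le_trans)
    ultimately show "y \<in> H K \<times> {..<D}" using y by (simp add: g_def)
  qed
  have "card S = card (g ` S)" using card_image[OF inj] by simp
  also have "\<dots> \<le> card (H K \<times> {..<D})" using img fin_sets by (intro card_mono) auto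
  also have "\<dots> = D * card (H K)" by (simp add: card_cartesian_product)
  finally show ?thesis using cS by simp
qed

lemma main_count:
  assumes "max_degree_le V pref D"
  shows "K * card (R K) \<le> D * card (Acc K)"
  using K_R[of K] sum_ptr[of K] sum_ptr_le[OF assms, of K] card_Acc_H[of K] by simp

end

context inst
begin

lemma Mt_mem: "m \<in> Acc k \<Longrightarrow> {m, tgt k m} \<in> Mt k"
  by (auto simp: Mt_def)

lemma port_tgt: "m \<in> Acc k \<Longrightarrow> port pref m (tgt k m) = P k m"
  using acc_tgt[of m k] dist[of m] port_nth[of pref m "P k m"] by (auto simp: Acc_def tgt_def)

lemma core:
  assumes mV: "m \<in> V" "red m" and wS: "w \<in> set (pref m)"
    and u1: "unmatched_or_prefers pref (Mt K) m w"
    and u2: "unmatched_or_prefers pref (Mt K) w m"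
  shows "m \<in> R K"
proof -
  from nb[OF mV(1) wS] mV have wV: "w \<in> V" "\<not> red w" and mw: "m \<in> set (pref w)" by auto
  have pw: "port pref m w < length (pref m)" "pref m ! port pref m w = w"
    using port_in[of pref m, OF dist[OF mV(1)] wS] by auto
  have pwm: "port pref w m < length (pref w)" "pref w ! port pref w m = m"
    using port_in[of pref w, OF dist[OF wV(1)] mw] by auto
  show ?thesis
  proof (cases "port pref m w < P K m")
    case True
    from rejected_inv[OF mV True] pw obtain i where h: "heldW pref (P K) w = Some i"
      and il: "i < port pref w m" by auto
    let ?u = "pref w ! i"
    from heldW_Some[OF h] have ilen: "i < length (pref w)" by auto
    hence "?u \<in> set (pref w)" by simp
    with nb[OF wV(1)] wV have uV: "?u \<in> V" "red ?u" by auto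
    from accepted_of_held[OF wV(1) h] uV have uA: "?u \<in> Acc K" and tu: "tgt K ?u = w"
      by (auto simp: Acc_def tgt_def)
    from Mt_mem[OF uA] tu have "{w, ?u} \<in> Mt K" by (simp add: insert_commute)
    with u2 have "prefers pref w m ?u" by (simp add: unmatched_or_prefers_def)
    hence "port pref w m < i" using port_nth[of pref w, OF dist[OF wV(1)] ilen] by (simp add: prefers_def)
    with il show ?thesis by simp
  next
    case False
    hence lt: "P K m < length (pref m)" using pw(1) by simp
    have "\<not> accepted pref (P K) m"
    proof
      assume a: "accepted pref (P K) m"
      hence mA: "m \<in> Acc K" using mV by (simp add: Acc_def)
      from Mt_mem[OF mA] u1 have "prefers pref m w (tgt K m)" by (simp add: unmatched_or_prefers_def)
      with port_tgt[OF mA] False show False by (simp add: prefers_def)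
    qed
    with lt mV show ?thesis by (simp add: R_def)
  qed
qed

lemma unstable_sub: "unstable_edges V pref (Mt K) \<subseteq> (\<Union>m\<in>R K. (\<lambda>w. {m, w}) ` set (pref m))"
proof
  fix e assume "e \<in> unstable_edges V pref (Mt K)"
  then obtain u v where e: "e = {u, v}" and inE: "{u, v} \<in> sm_edges V pref"
    and a1: "unmatched_or_prefers pref (Mt K) u v" and a2: "unmatched_or_prefers pref (Mt K) v u"
    by (auto simp: unstable_edges_def)
  from inE obtain a b where ab: "{u, v} = {a, b}" "a \<in> V" "b \<in> set (pref a)"
    by (auto simp: sm_edges_def)
  from ab(1) have uv: "(u = a \<and> v = b) \<or> (u = b \<and> v = a)" by (auto simp: doubleton_eq_iff)
  from nb[OF ab(2,3)] have bV: "b \<in> V" "red b \<noteq> red a" "a \<in> set (pref b)" by auto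
  show "e \<in> (\<Union>m\<in>R K. (\<lambda>w. {m, w}) ` set (pref m))"
  proof (cases "red a")
    case True
    have "a \<in> R K" using core[OF ab(2) True ab(3)] uv a1 a2 by auto
    moreover have "e = {a, b}" using e ab(1) by simp
    ultimately show ?thesis using ab(3) by blast
  next
    case False
    hence rb: "red b" using bV by simp
    have "b \<in> R K" using core[OF bV(1) rb bV(3)] uv a1 a2 by auto
    moreover have "e = {b, a}" using e ab(1) by (simp add: insert_commute)
    ultimately show ?thesis using bV(3) by blast
  qed
qed

lemma card_unstable:
  assumes "max_degree_le V pref D"
  shows "card (unstable_edges V pref (Mt K)) \<le> D * card (R K)"
proof -
  have "card (unstable_edges V pref (Mt K)) \<le> card (\<Union>m\<in>R K. (\<lambda>w. {m, w}) ` set (pref m))"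
    using unstable_sub fin_sets by (intro card_mono) auto
  also have "\<dots> \<le> (\<Sum>m\<in>R K. card ((\<lambda>w. {m, w}) ` set (pref m)))"
    by (rule card_UN_le) (simp add: fin_sets)
  also have "\<dots> \<le> (\<Sum>m\<in>R K. D)"
  proof (rule sum_mono)
    fix m assume "m \<in> R K"
    hence "m \<in> V" by (simp add: R_def)
    hence "length (pref m) \<le> D" using assms by (simp add: max_degree_le_def)
    moreover have "card ((\<lambda>w. {m, w}) ` set (pref m)) \<le> length (pref m)"
      using card_image_le[of "set (pref m)" "\<lambda>w. {m, w}"] card_length[of "pref m"] by simp
    ultimately show "card ((\<lambda>w. {m, w}) ` set (pref m)) \<le> D" by simp
  qed
  finally show ?thesis by (simp add: mult.commute)
qed

lemma card_Mt: "card (Mt k) = card (Acc k)"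
proof -
  have "inj_on (\<lambda>m. {m, tgt k m}) (Acc k)"
  proof (rule inj_onI)
    fix a b assume a: "a \<in> Acc k" and b: "b \<in> Acc k" and e: "{a, tgt k a} = {b, tgt k b}"
    from a b have "red a" "red b" by (auto simp: Acc_def)
    moreover have "\<not> red (tgt k a)" "\<not> red (tgt k b)" using acc_tgt[OF a] acc_tgt[OF b] by auto
    ultimately show "a = b" using e by (auto simp: doubleton_eq_iff)
  qed
  thus ?thesis by (simp add: Mt_def card_image)
qed

lemma Mt_matching: "is_matching V pref (Mt k)"
  unfolding is_matching_def
proof
  show "Mt k \<subseteq> sm_edges V pref"
    using acc_tgt by (fastforce simp: Mt_def sm_edges_def Acc_def)
next
  show "\<forall>e\<in>Mt k. \<forall>e'\<in>Mt k. e \<noteq> e' \<longrightarrow> e \<inter> e' = {}"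
  proof (intro ballI impI)
    fix e e' assume "e \<in> Mt k" "e' \<in> Mt k" "e \<noteq> e'"
    then obtain a b where a: "a \<in> Acc k" and b: "b \<in> Acc k" and ee: "e = {a, tgt k a}" "e' = {b, tgt k b}"
      by (auto simp: Mt_def)
    with \<open>e \<noteq> e'\<close> have ab: "a \<noteq> b" by auto
    have "tgt k a \<noteq> tgt k b" using tgt_inj[of k] a b ab by (meson inj_on_def)
    moreover from a b have "red a" "red b" by (auto simp: Acc_def)
    moreover have "\<not> red (tgt k a)" "\<not> red (tgt k b)" using acc_tgt[OF a] acc_tgt[OF b] by auto
    ultimately show "e \<inter> e' = {}" using ee ab by auto
  qed
qed

end

definition Alg :: algorithm where
 "Alg = \<lparr> init = (\<lambda>c d T. to_nat (St c False 0 None False)),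
        msg = (\<lambda>s i. case from_nat s of St r par p h f \<Rightarrow>
                 if r then (if i = p then 1 else 0) else (if h = Some i then 1 else 0)),
        trans = (\<lambda>s ms. case from_nat s of St r par p h f \<Rightarrow>
            if \<not> par then (if r then to_nat (St r True p h f)
                else to_nat (St r True p (if \<exists>i<length ms. ms!i = 1
                        then Some (LEAST i. i < length ms \<and> ms!i = 1) else None) f))
            else (if r then to_nat (St r False (if p < length ms \<and> \<not> (ms!p = 1) then Suc p else p) h
                              (p < length ms \<and> ms!p = 1))
                  else to_nat (St r False p h f))),
        out = (\<lambda>s. case from_nat s of St r par p h f \<Rightarrow> if r then (if f then Some p else None) else h) \<rparr>"

context inst
begin

definition accF where "accF k v = (case k of 0 \<Rightarrow> False | Suc j \<Rightarrow> accepted pref (P j) v)"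
definition hF where "hF k v = (case k of 0 \<Rightarrow> None | Suc j \<Rightarrow> heldW pref (P j) v)"
definition sE where "sE k v = (if red v then St True False (P k v) None (accF k v)
                                else St False False 0 (hF k v) False)"
definition sO where "sO k v = (if red v then St True True (P k v) None (accF k v)
                                else St False True 0 (heldW pref (P k) v) False)"

lemma port_eq_iff:
  assumes uV: "u \<in> V" and vu: "v \<in> set (pref u)"
  shows "(port pref u v = P k u) = proposes pref (P k) u v"
  using port_in[of pref u, OF dist[OF uV] vu] port_nth[of pref u, OF dist[OF uV]]
  by (auto simp: proposes_def)

lemma sim_E_O:
  assumes IH: "\<forall>u\<in>V. run Alg T red pref (2*k) u = to_nat (sE k u)" and vV: "v \<in> V"
  shows "run Alg T red pref (Suc (2*k)) v = to_nat (sO k v)"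
proof -
  define ms where "ms = map (\<lambda>u. msg Alg (to_nat (sE k u)) (port pref u v)) (pref v)"
  have "map (\<lambda>u. msg Alg (run Alg T red pref (2*k) u) (port pref u v)) (pref v) = ms"
    unfolding ms_def using IH nb[OF vV] by (auto intro: map_cong)
  hence r: "run Alg T red pref (Suc (2*k)) v = trans Alg (to_nat (sE k v)) ms"
    using IH vV by simp
  show ?thesis
  proof (cases "red v")
    case True thus ?thesis using r by (simp add: Alg_def sE_def sO_def)
  next
    case False
    have len: "length ms = length (pref v)" by (simp add: ms_def)
    have iff: "\<And>i. i < length (pref v) \<Longrightarrow> (ms ! i = 1) = proposes pref (P k) (pref v ! i) v"
    proof -
      fix i assume i: "i < length (pref v)"
      let ?u = "pref v ! i"
      have uS: "?u \<in> set (pref v)" using i by simp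
      with nb[OF vV] False have uV: "?u \<in> V" "red ?u" "v \<in> set (pref ?u)" by auto
      have "ms ! i = (if port pref ?u v = P k ?u then 1 else 0)"
        using i uV by (simp add: ms_def Alg_def sE_def)
      thus "(ms ! i = 1) = proposes pref (P k) ?u v" using port_eq_iff[OF uV(1) uV(3)] by simp
    qed
    have pe: "(\<lambda>i. i < length ms \<and> ms!i = 1) = (\<lambda>i. i < length (pref v) \<and> proposes pref (P k) (pref v ! i) v)"
      using iff len by auto
    have ex: "(\<exists>i<length ms. ms!i = 1) = (\<exists>i<length (pref v). proposes pref (P k) (pref v ! i) v)"
      using iff len by auto
    have "(if \<exists>i<length ms. ms!i = 1 then Some (LEAST i. i < length ms \<and> ms!i = 1) else None)
          = heldW pref (P k) v"
      unfolding heldW_def ex pe by simp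
    thus ?thesis using r False by (simp add: Alg_def sE_def sO_def)
  qed
qed

lemma sim_O_E:
  assumes IH: "\<forall>u\<in>V. run Alg T red pref (Suc (2*k)) u = to_nat (sO k u)" and vV: "v \<in> V"
  shows "run Alg T red pref (2 * Suc k) v = to_nat (sE (Suc k) v)"
proof -
  define ms where "ms = map (\<lambda>u. msg Alg (to_nat (sO k u)) (port pref u v)) (pref v)"
  have "map (\<lambda>u. msg Alg (run Alg T red pref (Suc (2*k)) u) (port pref u v)) (pref v) = ms"
    unfolding ms_def using IH nb[OF vV] by (auto intro: map_cong)
  hence r: "run Alg T red pref (2 * Suc k) v = trans Alg (to_nat (sO k v)) ms"
    using IH vV by simp
  show ?thesis
  proof (cases "red v")
    case False thus ?thesis using r by (simp add: Alg_def sE_def sO_def hF_def)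
  next
    case True
    have len: "length ms = length (pref v)" by (simp add: ms_def)
    have acc: "(P k v < length ms \<and> ms ! P k v = 1) = accepted pref (P k) v"
    proof (cases "P k v < length (pref v)")
      case True
      let ?w = "pref v ! P k v"
      have "?w \<in> set (pref v)" using True by simp
      with nb[OF vV] \<open>red v\<close> have wV: "\<not> red ?w" by auto
      have "ms ! P k v = (if heldW pref (P k) ?w = Some (port pref ?w v) then 1 else 0)"
        using True wV by (simp add: ms_def Alg_def sO_def)
      thus ?thesis using True len by (simp add: accepted_def)
    next
      case False thus ?thesis using len by (simp add: accepted_def)
    qed
    have "P (Suc k) v = (if P k v < length ms \<and> \<not> (ms ! P k v = 1) then Suc (P k v) else P k v)"
      using acc len True by (auto simp: ptr_Suc step_def)
    thus ?thesis using r True acc by (simp add: Alg_def sE_def sO_def accF_def)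
  qed
qed

lemma sim: "\<forall>v\<in>V. run Alg T red pref (2*k) v = to_nat (sE k v) \<and>
                   run Alg T red pref (Suc (2*k)) v = to_nat (sO k v)"
proof (induction k)
  case 0
  have E: "\<forall>v\<in>V. run Alg T red pref (2*0) v = to_nat (sE 0 v)"
    by (auto simp: Alg_def sE_def accF_def hF_def)
  thus ?case using sim_E_O[OF E] by blast
next
  case (Suc k)
  have E: "\<forall>v\<in>V. run Alg T red pref (2*Suc k) v = to_nat (sE (Suc k) v)"
    using sim_O_E Suc.IH by blast
  thus ?case using sim_E_O[OF E] by blast
qed

lemma node_out:
  assumes "v \<in> V"
  shows "node_output Alg (2 * Suc K) red pref v =
    (if red v then (if accepted pref (P K) v then Some (P K v) else None) else heldW pref (P K) v)"
proof -
  have "run Alg (2 * Suc K) red pref (2 * Suc K) v = to_nat (sE (Suc K) v)" using sim assms by blast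
  moreover have "accepted pref (P K) v \<Longrightarrow> P (Suc K) v = P K v" by (simp add: ptr_Suc step_def)
  ultimately show ?thesis
    by (auto simp: node_output_def Alg_def sE_def accF_def hF_def)
qed

lemma consistent: "consistent_output Alg (2 * Suc K) V red pref"
  unfolding consistent_output_def
proof (intro ballI allI impI)
  fix v i assume vV: "v \<in> V" and o: "node_output Alg (2 * Suc K) red pref v = Some i"
  show "i < length (pref v) \<and>
        node_output Alg (2 * Suc K) red pref (pref v ! i) = Some (port pref (pref v ! i) v)"
  proof (cases "red v")
    case True
    with o node_out[OF vV] have a: "accepted pref (P K) v" and i: "i = P K v" by (auto split: if_splits)
    hence vA: "v \<in> Acc K" using vV True by (simp add: Acc_def)
    from acc_tgt[OF vA] have "tgt K v \<in> V" "\<not> red (tgt K v)"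
      "heldW pref (P K) (tgt K v) = Some (port pref (tgt K v) v)" "P K v < length (pref v)" by auto
    thus ?thesis using node_out[of "tgt K v"] i by (simp add: tgt_def)
  next
    case False
    with o node_out[OF vV] have h: "heldW pref (P K) v = Some i" by simp
    let ?u = "pref v ! i"
    from heldW_Some[OF h] have il: "i < length (pref v)" by auto
    hence "?u \<in> set (pref v)" by simp
    with nb[OF vV] False have uV: "?u \<in> V" "red ?u" by auto
    from accepted_of_held[OF vV h] have a: "accepted pref (P K) ?u" and t: "pref ?u ! P K ?u = v" by auto
    have pl: "P K ?u < length (pref ?u)" using a by (simp add: accepted_def)
    have "port pref ?u v = P K ?u" using port_nth[of pref ?u, OF dist[OF uV(1)] pl] t by simp
    thus ?thesis using node_out[OF uV(1)] uV a il by simp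
  qed
qed

lemma out_matching: "output_matching Alg (2 * Suc K) V red pref = Mt K"
proof
  show "output_matching Alg (2 * Suc K) V red pref \<subseteq> Mt K"
  proof
    fix e assume "e \<in> output_matching Alg (2 * Suc K) V red pref"
    then obtain v i where e: "e = {v, pref v ! i}" and vV: "v \<in> V"
      and o: "node_output Alg (2 * Suc K) red pref v = Some i"
      by (auto simp: output_matching_def)
    show "e \<in> Mt K"
    proof (cases "red v")
      case True
      with o node_out[OF vV] have "accepted pref (P K) v" "i = P K v" by (auto split: if_splits)
      hence "v \<in> Acc K" "e = {v, tgt K v}" using vV True e by (auto simp: Acc_def tgt_def)
      thus ?thesis using Mt_mem by simp
    next
      case False
      with o node_out[OF vV] have h: "heldW pref (P K) v = Some i" by simp
      let ?u = "pref v ! i"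
      from heldW_Some[OF h] have "i < length (pref v)" by auto
      hence "?u \<in> set (pref v)" by simp
      with nb[OF vV] False have uV: "?u \<in> V" "red ?u" by auto
      from accepted_of_held[OF vV h] uV have "?u \<in> Acc K" "tgt K ?u = v" by (auto simp: Acc_def tgt_def)
      with Mt_mem[of ?u K] e show ?thesis by (simp add: insert_commute)
    qed
  qed
next
  show "Mt K \<subseteq> output_matching Alg (2 * Suc K) V red pref"
  proof
    fix e assume "e \<in> Mt K"
    then obtain m where m: "m \<in> Acc K" and e: "e = {m, tgt K m}" by (auto simp: Mt_def)
    from m have mV: "m \<in> V" "red m" "accepted pref (P K) m" by (auto simp: Acc_def)
    hence "node_output Alg (2 * Suc K) red pref m = Some (P K m)" using node_out by simp
    thus "e \<in> output_matching Alg (2 * Suc K) V red pref"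
      using e mV unfolding output_matching_def tgt_def by blast
  qed
qed

end
lemma final_arith:
  fixes U r c K D :: nat and eps :: real
  assumes "U \<le> D * r" "K * r \<le> D * c" "real D ^ 2 \<le> eps * real K" "K > 0" "eps > 0"
  shows "real U \<le> eps * real c"
proof -
  have a: "real U * real K \<le> real D * real r * real K" using assms(1)
    by (metis mult_right_mono of_nat_0_le_iff of_nat_le_iff of_nat_mult)
  have b: "real K * real r \<le> real D * real c" using assms(2) by (metis of_nat_le_iff of_nat_mult)
  have "real D * real r * real K = real D * (real K * real r)" by simp
  also have "\<dots> \<le> real D * (real D * real c)" using b by (simp add: mult_left_mono)
  also have "\<dots> = real D ^ 2 * real c" by (simp add: power2_eq_square)
  also have "\<dots> \<le> eps * real K * real c" using assms(3) by (simp add: mult_right_mono)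
  finally have "real U * real K \<le> (eps * real c) * real K" using a by (simp add: mult_ac)
  thus ?thesis using assms(4) by simp
qed

theorem theorem1:
  fixes eps :: real and D :: nat
  assumes "eps > 0" and "D \<ge> 1"
  shows "\<exists>(A :: algorithm) (T :: nat). real T \<le> 4 + 2 * real D ^ 2 / eps \<and>
    (\<forall>(V :: nat set) red pref. sm_instance V red pref \<and> max_degree_le V pref D \<longrightarrow>
       consistent_output A T V red pref \<and>
       eps_stable eps V pref (output_matching A T V red pref))"
proof -
  define x where "x = real D ^ 2 / eps"
  have xpos: "x > 0" using assms by (simp add: x_def)
  define K where "K = nat \<lceil>x\<rceil>"
  have Kx: "real K \<ge> x" "real K \<le> x + 1" using xpos by (auto simp: K_def)
  have Kpos: "K > 0" using xpos Kx by linarith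
  have epsK: "real D ^ 2 \<le> eps * real K"
    using Kx(1) assms(1) by (simp add: x_def divide_le_eq mult.commute)
  have T: "real (2 * Suc K) \<le> 4 + 2 * real D ^ 2 / eps" using Kx(2) by (simp add: x_def)
  show ?thesis
  proof (intro exI conjI allI impI)
    show "real (2 * Suc K) \<le> 4 + 2 * real D ^ 2 / eps" by (rule T)
  next
    fix V :: "nat set" and red pref
    assume h: "sm_instance V red pref \<and> max_degree_le V pref D"
    interpret inst V red pref using h by unfold_locales simp
    show "consistent_output Alg (2 * Suc K) V red pref" by (rule consistent)
    have U: "card (unstable_edges V pref (Mt K)) \<le> D * card (R K)" using card_unstable h by simp
    have C: "K * card (R K) \<le> D * card (Mt K)" using main_count h card_Mt by simp
    show "eps_stable eps V pref (output_matching Alg (2 * Suc K) V red pref)"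
      unfolding out_matching eps_stable_def
      using Mt_matching final_arith[OF U C epsK Kpos assms(1)] by simp
  qed
qed

end
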